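(* Let $\mathcal{APS}_4$ be the set of all nonnegative integers that occur as the number of points of $\mathbb{Z}^4$ in the relative interior of a lattice square $\mathrm{conv}\{0,u,v,u+v\}$, where $u,v\in\mathbb{Z}^4$ are nonzero with $u\cdot v=0$ and $u\cdot u=v\cdot v$. Then: (i) $\mathcal{APS}_4$ contains every odd positive integer; (ii) for every prime $p\ge 11$, the even number $p-1$ belongs to $\mathcal{APS}_4$.
   Context: This set is called the sequence of almost perfect squares in dimension 4. For such a square $\square$ with Ehrhart polynomial $E_\square$ (so $E_\square(t)=\#(t\square\cap\mathbb{Z}^4)$ for positive integers $t$), the number of lattice points in its relative interior equals $E_\square(-1)$. *)

theory Defs
  imports "HOL-Analysis.Analysis" "HOL-Computational_Algebra.Primes"
begin

definition is_lattice_point4 :: "real^4 \<Rightarrow> bool" where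
  "is_lattice_point4 x \<longleftrightarrow> (\<forall>i. x $ i \<in> \<int>)"

definition lattice_square4 :: "real^4 \<Rightarrow> real^4 \<Rightarrow> (real^4) set" where
  "lattice_square4 u v = convex hull {0, u, v, u + v}"

definition APS4 :: "nat set" where
  "APS4 = {n. \<exists>u v :: real^4. is_lattice_point4 u \<and> is_lattice_point4 v \<and>
             u \<noteq> 0 \<and> v \<noteq> 0 \<and> inner u v = 0 \<and> inner u u = inner v v \<and>
             n = card {x \<in> rel_interior (lattice_square4 u v). is_lattice_point4 x}}"

end

theory Submission
  imports Defs
begin


definition v4 :: "real \<Rightarrow> real \<Rightarrow> real \<Rightarrow> real \<Rightarrow> real^4" where
  "v4 a b c d = (\<chi> i. if i = 1 then a else if i = 2 then b else if i = 3 then c else d)"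

lemma v4_nth [simp]: "v4 a b c d $ 1 = a" "v4 a b c d $ 2 = b" "v4 a b c d $ 3 = c" "v4 a b c d $ 4 = d"
  by (simp_all add: v4_def)

lemma inner_v4: "inner (x::real^4) y = x$1*y$1 + x$2*y$2 + x$3*y$3 + x$4*y$4"
  by (simp add: inner_vec_def sum_4)

lemma lattice_iff: "is_lattice_point4 x \<longleftrightarrow> x$1 \<in> \<int> \<and> x$2 \<in> \<int> \<and> x$3 \<in> \<int> \<and> x$4 \<in> \<int>"
  unfolding is_lattice_point4_def forall_4 by simp

lemma v4_eq_zero: "v4 a b c d = 0 \<longleftrightarrow> a = 0 \<and> b = 0 \<and> c = 0 \<and> d = 0"
  by (auto simp: vec_eq_iff forall_4)


lemma corners_prod: "{x::real\<times>real. \<forall>i\<in>Basis. x \<bullet> i = 0 \<or> x \<bullet> i = 1} = {(0,0),(1,0),(0,1),(1,1)}"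
  by (auto simp: Basis_prod_def)

lemma mem_box_prod: "(x::real\<times>real) \<in> box 0 One \<longleftrightarrow> 0 < fst x \<and> fst x < 1 \<and> 0 < snd x \<and> snd x < 1"
  by (cases x) (auto simp: mem_box Basis_prod_def)

lemma sq_rel_interior:
  fixes u v :: "real^4"
  assumes uv: "inner u v = 0" and u: "u \<noteq> 0" and v: "v \<noteq> 0"
  defines "f \<equiv> (\<lambda>x::real\<times>real. fst x *\<^sub>R u + snd x *\<^sub>R v)"
  shows "rel_interior (lattice_square4 u v) = f ` box 0 One" and "inj f"
proof -
  have lin: "linear f" unfolding f_def
    by (intro linearI) (auto simp: algebra_simps)
  show injf: "inj f"
  proof (rule injI)
    fix x y assume "f x = f y"
    then have "(fst x - fst y) *\<^sub>R u + (snd x - snd y) *\<^sub>R v = 0"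
      by (simp add: f_def algebra_simps)
    then have e: "inner u ((fst x - fst y) *\<^sub>R u + (snd x - snd y) *\<^sub>R v) = 0"
      "inner v ((fst x - fst y) *\<^sub>R u + (snd x - snd y) *\<^sub>R v) = 0" by simp_all
    have "(fst x - fst y) * inner u u = 0" "(snd x - snd y) * inner v v = 0"
      using e uv by (simp_all add: inner_add_right inner_commute)
    then show "x = y" using u v by (simp add: prod_eq_iff)
  qed
  have "f ` {(0,0),(1,0),(0,1),(1,1)} = {0, u, v, u + v}"
    by (simp add: f_def)
  then have "lattice_square4 u v = f ` (convex hull {(0,0),(1,0),(0,1),(1,1)})"
    unfolding lattice_square4_def by (simp add: convex_hull_linear_image[OF lin])
  also have "\<dots> = f ` cbox 0 One"
    using unit_interval_convex_hull[where 'a="real\<times>real"] corners_prod by simp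
  finally have sq: "lattice_square4 u v = f ` cbox 0 One" .
  have "(1/2, 1/2) \<in> box (0::real\<times>real) One" by (simp add: mem_box_prod)
  then have "interior (cbox (0::real\<times>real) One) \<noteq> {}" by (auto simp: interior_cbox)
  then have "rel_interior (cbox (0::real\<times>real) One) = box 0 One"
    by (simp add: rel_interior_nonempty_interior interior_cbox)
  moreover have "bounded_linear f" using lin linear_conv_bounded_linear by blast
  ultimately show "rel_interior (lattice_square4 u v) = f ` box 0 One"
    unfolding sq by (simp add: rel_interior_injective_linear_image injf)
qed

lemma card_interior:
  fixes u v :: "real^4"
  assumes uv: "inner u v = 0" and u: "u \<noteq> 0" and v: "v \<noteq> 0"
  shows "card {x \<in> rel_interior (lattice_square4 u v). is_lattice_point4 x} =
         card {st. 0 < fst st \<and> fst st < 1 \<and> 0 < snd st \<and> snd st < 1 \<and> is_lattice_point4 (fst st *\<^sub>R u + snd st *\<^sub>R v)}"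
proof -
  define f where "f \<equiv> (\<lambda>x::real\<times>real. fst x *\<^sub>R u + snd x *\<^sub>R v)"
  note R = sq_rel_interior[OF assms, folded f_def]
  have "{x \<in> rel_interior (lattice_square4 u v). is_lattice_point4 x} =
        f ` {st. 0 < fst st \<and> fst st < 1 \<and> 0 < snd st \<and> snd st < 1 \<and> is_lattice_point4 (fst st *\<^sub>R u + snd st *\<^sub>R v)}"
    unfolding R(1) by (auto simp: mem_box_prod f_def)
  then show ?thesis using R(2) by (simp add: card_image inj_on_subset)
qed


lemma euler4:
  fixes a1 a2 a3 a4 r1 r2 r3 r4 :: int
  shows "(a1^2+a2^2+a3^2+a4^2)*(r1^2+r2^2+r3^2+r4^2) =
    (a1*r1+a2*r2+a3*r3+a4*r4)^2 + (a1*r2-a2*r1+a3*r4-a4*r3)^2 +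
    (a1*r3-a3*r1+a4*r2-a2*r4)^2 + (a1*r4-a4*r1+a2*r3-a3*r2)^2"
  by (simp add: power2_eq_square algebra_simps)

lemma dvd_small_zero:
  fixes p k :: int
  assumes "p dvd k" "\<bar>k\<bar> < p" shows "k = 0"
proof -
  obtain j where "k = p * j" using assms(1) by blast
  with assms(2) have "\<bar>p\<bar> * \<bar>j\<bar> < p" by (simp add: abs_mult)
  then have "\<bar>j\<bar> < 1" using assms by (smt (verit) mult_le_cancel_left1)
  then show ?thesis using \<open>k = p * j\<close> by simp
qed

lemma sq_inj_mod:
  fixes p x y :: int
  assumes p: "prime p" and "0 \<le> x" "2*x < p" "0 \<le> y" "2*y < p" "p dvd x^2 - y^2"
  shows "x = y"
proof -
  have "x^2 - y^2 = (x - y) * (x + y)" by (simp add: power2_eq_square algebra_simps)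
  then have "p dvd (x - y) \<or> p dvd (x + y)" using assms(6) p prime_dvd_mult_iff by metis
  then show ?thesis
  proof
    assume "p dvd x - y" then show ?thesis using dvd_small_zero[of p "x-y"] assms by simp
  next
    assume "p dvd x + y" then have "x + y = 0" using dvd_small_zero[of p "x+y"] assms by simp
    then show ?thesis using assms by simp
  qed
qed

lemma exists_xy:
  fixes p :: int
  assumes p: "prime p" and odd: "odd p"
  shows "\<exists>x y. 0 \<le> x \<and> 2*x < p \<and> 0 \<le> y \<and> 2*y < p \<and> p dvd x^2 + y^2 + 1"
proof (rule ccontr)
  assume H: "\<not> ?thesis"
  obtain h where hp: "p = 2*h + 1" using odd by (metis oddE)
  have p2: "p \<ge> 2" using p prime_ge_2_int by blast
  define I where "I = {0..h}"
  define A where "A = (\<lambda>x. x^2 mod p) ` I"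
  define B where "B = (\<lambda>y. (-1 - y^2) mod p) ` I"
  have injA: "inj_on (\<lambda>x. x^2 mod p) I"
  proof (rule inj_onI)
    fix x y assume "x \<in> I" "y \<in> I" "x^2 mod p = y^2 mod p"
    then show "x = y" using sq_inj_mod[OF p, of x y] hp by (auto simp: I_def mod_eq_dvd_iff)
  qed
  have injB: "inj_on (\<lambda>y. (-1 - y^2) mod p) I"
  proof (rule inj_onI)
    fix x y assume xy: "x \<in> I" "y \<in> I" "(-1 - x^2) mod p = (-1 - y^2) mod p"
    then have "p dvd (-1 - x^2) - (-1 - y^2)" by (simp add: mod_eq_dvd_iff)
    then have "p dvd y^2 - x^2" by simp
    then show "x = y" using sq_inj_mod[OF p, of y x] hp xy(1,2) by (auto simp: I_def)
  qed
  have disj: "A \<inter> B = {}"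
  proof (rule ccontr)
    assume "A \<inter> B \<noteq> {}"
    then obtain x y where xy: "x \<in> I" "y \<in> I" "x^2 mod p = (-1 - y^2) mod p"
      unfolding A_def B_def by auto
    then have "p dvd x^2 - (-1 - y^2)" by (simp add: mod_eq_dvd_iff)
    then have "p dvd x^2 + y^2 + 1" by (simp add: algebra_simps)
    then show False using H xy(1,2) hp by (auto simp: I_def)
  qed
  have sub: "A \<union> B \<subseteq> {0..<p}" using p2 unfolding A_def B_def by auto
  have cI: "card I = nat (h + 1)" by (simp add: I_def)
  have "card (A \<union> B) = card A + card B" using disj by (simp add: card_Un_disjoint A_def B_def I_def)
  also have "\<dots> = 2 * nat (h+1)" using injA injB cI by (simp add: A_def B_def card_image)
  finally have "2 * nat (h+1) \<le> card {0..<p}" using card_mono[OF _ sub] by simp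
  moreover have "h \<ge> 0" using hp p2 by simp
  ultimately show False using hp by (simp add: nat_add_distrib)
qed


lemma sq_le_of_bounds: fixes r k :: int assumes "-k \<le> r" "r \<le> k" shows "r^2 \<le> k^2"
proof -
  have "\<bar>r\<bar> \<le> k" using assms by simp
  then have "\<bar>r\<bar>^2 \<le> k^2" using power_mono abs_ge_zero by blast
  then show ?thesis by simp
qed

lemma reduce_mod:
  fixes a m k :: int assumes "m > 0"
  shows "a = m * ((a + k) div m) + ((a + k) mod m - k)" "-k \<le> (a + k) mod m - k" "(a + k) mod m - k \<le> m - 1 - k"
proof -
  have "(a + k) div m * m + (a + k) mod m = a + k" by (rule div_mult_mod_eq)
  then show "a = m * ((a + k) div m) + ((a + k) mod m - k)" by (simp add: algebra_simps)
  show "-k \<le> (a + k) mod m - k" using assms by simp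
  have "(a + k) mod m < m" using assms by simp
  then show "(a + k) mod m - k \<le> m - 1 - k" by simp
qed

lemma descent:
  fixes p :: int
  assumes p: "prime p" and odd: "odd p"
  shows "0 < m \<Longrightarrow> m < p \<Longrightarrow> a^2+b^2+c^2+d^2 = m*p \<Longrightarrow> \<exists>a b c d::int. a^2+b^2+c^2+d^2 = p"
proof (induction "nat m" arbitrary: m a b c d rule: less_induct)
  case less
  show ?case
  proof (cases "m = 1")
    case True then show ?thesis using less.prems by auto
  next
    case False
    then have m1: "m > 1" using less.prems by simp
    define k where "k = m div 2"
    define q1 where "q1 = (a + k) div m"
    define q2 where "q2 = (b + k) div m"
    define q3 where "q3 = (c + k) div m"
    define q4 where "q4 = (d + k) div m"
    define r1 where "r1 = (a + k) mod m - k"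
    define r2 where "r2 = (b + k) mod m - k"
    define r3 where "r3 = (c + k) mod m - k"
    define r4 where "r4 = (d + k) mod m - k"
    have m0: "m > 0" using m1 by simp
    note R1 = reduce_mod[OF m0, where a=a and k=k, folded q1_def r1_def]
    note R2 = reduce_mod[OF m0, where a=b and k=k, folded q2_def r2_def]
    note R3 = reduce_mod[OF m0, where a=c and k=k, folded q3_def r3_def]
    note R4 = reduce_mod[OF m0, where a=d and k=k, folded q4_def r4_def]
    define r0 where "r0 = p - 2*(a*q1+b*q2+c*q3+d*q4) + m*(q1^2+q2^2+q3^2+q4^2)"
    have S: "r1^2+r2^2+r3^2+r4^2 = m*r0"
    proof -
      have rr: "r1 = a - m*q1" "r2 = b - m*q2" "r3 = c - m*q3" "r4 = d - m*q4"
        using R1(1) R2(1) R3(1) R4(1) by linarith+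
      have "r1^2+r2^2+r3^2+r4^2 = (a^2+b^2+c^2+d^2) - 2*m*(a*q1+b*q2+c*q3+d*q4) + m^2*(q1^2+q2^2+q3^2+q4^2)"
        unfolding rr by (simp add: power2_eq_square algebra_simps)
      also have "\<dots> = m*r0" using less.prems(3) by (simp add: r0_def power2_eq_square algebra_simps)
      finally show ?thesis .
    qed
    have mk: "m = 2*k \<or> m = 2*k+1" unfolding k_def by presburger
    have km: "m - 1 - k \<le> k" using mk by auto
    have sq1: "r1^2 \<le> k^2" "r2^2 \<le> k^2" "r3^2 \<le> k^2" "r4^2 \<le> k^2"
      by (rule sq_le_of_bounds; use R1(2,3) R2(2,3) R3(2,3) R4(2,3) km in linarith)+
    have k0: "k \<ge> 0" unfolding k_def using m0 by simp
    have k4: "4*k^2 \<le> m^2" using mk k0 by (auto simp: power2_eq_square algebra_simps)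
    have Sle: "m*r0 \<le> m*m" using S sq1 k4 by (simp add: power2_eq_square)
    then have r0m: "r0 \<le> m" using m0 by simp
    have r0pos: "r0 > 0"
    proof (rule ccontr)
      assume "\<not> r0 > 0"
      moreover have "m*r0 \<ge> 0" using S by (metis add_nonneg_nonneg zero_le_power2)
      ultimately have "r0 = 0" using m0 by (simp add: zero_le_mult_iff)
      then have "r1^2+r2^2+r3^2+r4^2 = 0" using S by simp
      then have "r1 = 0" "r2 = 0" "r3 = 0" "r4 = 0" by (simp_all add: sum_power2_eq_zero_iff add_nonneg_eq_0_iff)
      then have "a = m*q1" "b = m*q2" "c = m*q3" "d = m*q4" using R1(1) R2(1) R3(1) R4(1) by simp_all
      then have "m*(m*(q1^2+q2^2+q3^2+q4^2)) = m*p" using less.prems(3) by (simp add: power2_eq_square algebra_simps)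
      then have "m*(q1^2+q2^2+q3^2+q4^2) = p" using m0 by simp
      then have "m dvd p" by (metis dvd_triv_left)
      then have "m = 1 \<or> m = p" using p m0 by (simp add: prime_int_iff)
      then show False using m1 less.prems(2) by simp
    qed
    show ?thesis
    proof (cases "r0 = m")
      case False
      then have r0lt: "r0 < m" using r0m by simp
      define z1 where "z1 = p - (a*q1+b*q2+c*q3+d*q4)"
      define z2 where "z2 = b*q1 - a*q2 + d*q3 - c*q4"
      define z3 where "z3 = c*q1 - a*q3 + b*q4 - d*q2"
      define z4 where "z4 = d*q1 - a*q4 + c*q2 - b*q3"
      have rr: "r1 = a - m*q1" "r2 = b - m*q2" "r3 = c - m*q3" "r4 = d - m*q4"
        using R1(1) R2(1) R3(1) R4(1) by linarith+
      have e1: "a*r1+b*r2+c*r3+d*r4 = m*z1"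
        using less.prems(3) unfolding rr z1_def by (simp add: power2_eq_square algebra_simps)
      have e2: "a*r2-b*r1+c*r4-d*r3 = m*z2" unfolding rr z2_def by (simp add: algebra_simps)
      have e3: "a*r3-c*r1+d*r2-b*r4 = m*z3" unfolding rr z3_def by (simp add: algebra_simps)
      have e4: "a*r4-d*r1+b*r3-c*r2 = m*z4" unfolding rr z4_def by (simp add: algebra_simps)
      have "(m*p)*(m*r0) = (m*z1)^2 + (m*z2)^2 + (m*z3)^2 + (m*z4)^2"
        using euler4[of a b c d r1 r2 r3 r4] less.prems(3) S e1 e2 e3 e4 by simp
      then have "m^2 * (r0*p) = m^2 * (z1^2+z2^2+z3^2+z4^2)"
        by (simp add: power2_eq_square algebra_simps)
      then have eq: "z1^2+z2^2+z3^2+z4^2 = r0*p" using m0 by simp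
      have "nat r0 < nat m" using r0lt r0pos by simp
      then show ?thesis using less.hyps[of r0 z1 z2 z3 z4] r0pos r0lt less.prems(2) eq by simp
    next
      case True
      then have S2: "r1^2+r2^2+r3^2+r4^2 = m^2" using S by (simp add: power2_eq_square)
      have me: "m = 2*k"
      proof (rule ccontr)
        assume "m \<noteq> 2*k"
        then have "m = 2*k+1" using mk by simp
        then have "4*k^2 < m^2" using k0 by (simp add: power2_eq_square algebra_simps)
        then show False using S2 sq1 by linarith
      qed
      have m4: "m^2 = 4*k^2" using me by (simp add: power2_eq_square)
      have eqs: "r1^2 = k^2" "r2^2 = k^2" "r3^2 = k^2" "r4^2 = k^2"
        using S2 sq1 m4 by linarith+
      have rk: "r1 = -k" "r2 = -k" "r3 = -k" "r4 = -k"
      proof -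
        have "\<And>r. r^2 = k^2 \<Longrightarrow> r \<le> m - 1 - k \<Longrightarrow> r = -k"
        proof -
          fix r assume "r^2 = k^2" "r \<le> m - 1 - k"
          then have "r = k \<or> r = -k" by (simp add: power2_eq_iff)
          then show "r = -k" using \<open>r \<le> m - 1 - k\<close> me by auto
        qed
        then show "r1 = -k" "r2 = -k" "r3 = -k" "r4 = -k" using eqs R1(3) R2(3) R3(3) R4(3) by auto
      qed
      have ab: "a = k*(2*q1-1)" "b = k*(2*q2-1)" "c = k*(2*q3-1)" "d = k*(2*q4-1)"
        using R1(1) R2(1) R3(1) R4(1) rk me by (simp_all add: algebra_simps)
      have "(k*(2*q1-1))^2 + (k*(2*q2-1))^2 + (k*(2*q3-1))^2 + (k*(2*q4-1))^2 = (2*k)*p"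
        using less.prems(3) me unfolding ab by simp
      then have "k^2 * (4*(q1^2-q1+q2^2-q2+q3^2-q3+q4^2-q4+1)) = 2*k*p"
        by (simp add: power2_eq_square algebra_simps)
      then have "k * (k*(4*(q1^2-q1+q2^2-q2+q3^2-q3+q4^2-q4+1))) = k * (2*p)"
        by (simp add: power2_eq_square mult.assoc)
      moreover have "k > 0" using me m0 by simp
      ultimately have "k*(4*(q1^2-q1+q2^2-q2+q3^2-q3+q4^2-q4+1)) = 2*p" by simp
      then have "p = 2*(k*(q1^2-q1+q2^2-q2+q3^2-q3+q4^2-q4+1))"
        by (simp only: mult.left_commute[of k 4])
      then show ?thesis using odd by simp
    qed
  qed
qed

lemma lagrange_prime:
  fixes p :: int
  assumes p: "prime p" and odd: "odd p"
  shows "\<exists>a b c d. a^2+b^2+c^2+d^2 = p"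
proof -
  obtain x y where xy: "0 \<le> x" "2*x < p" "0 \<le> y" "2*y < p" "p dvd x^2 + y^2 + 1"
    using exists_xy[OF p odd] by blast
  then obtain m where m: "x^2 + y^2 + 1 = p*m" by blast
  have p2: "p \<ge> 2" using p prime_ge_2_int by blast
  have "(2*x)^2 < p^2" using power_strict_mono[of "2*x" p 2] xy by simp
  moreover have "(2*y)^2 < p^2" using power_strict_mono[of "2*y" p 2] xy by simp
  ultimately have "4*x^2 < p^2" "4*y^2 < p^2" by (simp_all add: power_mult_distrib)
  moreover have "p*p \<ge> 4" using p2 mult_mono[of 2 p 2 p] by simp
  ultimately have "4*(p*m) < 4*(p*p)" using m unfolding power2_eq_square by linarith
  then have "m < p" using p2 by simp
  moreover have "m > 0" using m p2 by (smt (verit) zero_le_power2 mult_nonneg_nonpos)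
  ultimately show ?thesis using descent[OF p odd, of m x y 1 0] m by (simp add: algebra_simps)
qed


definition "r11 a b c d = (a^2+b^2-c^2-d^2::int)"
definition "r12 a b c d = (2*(b*c+a*d)::int)"
definition "r13 a b c d = (2*(b*d-a*c)::int)"
definition "r21 a b c d = (2*(b*c-a*d)::int)"
definition "r22 a b c d = (a^2-b^2+c^2-d^2::int)"
definition "r23 a b c d = (2*(c*d+a*b)::int)"
definition "r31 a b c d = (2*(b*d+a*c)::int)"
definition "r32 a b c d = (2*(c*d-a*b)::int)"
definition "r33 a b c d = (a^2-b^2-c^2+d^2::int)"

lemmas rdefs = r11_def r12_def r13_def r21_def r22_def r23_def r31_def r32_def r33_def

definition "W1 a b c d x y z = x * r11 a b c d + y * r21 a b c d + z * r31 a b c d"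
definition "W2 a b c d x y z = x * r12 a b c d + y * r22 a b c d + z * r32 a b c d"
definition "W3 a b c d x y z = x * r13 a b c d + y * r23 a b c d + z * r33 a b c d"

lemma W_norm: "(W1 a b c d x y z)^2 + (W2 a b c d x y z)^2 + (W3 a b c d x y z)^2
   = (a^2+b^2+c^2+d^2)^2 * (x^2+y^2+z^2)"
  unfolding W1_def W2_def W3_def rdefs by (simp add: power2_eq_square algebra_simps)

lemma W_back:
  "r11 a b c d * W1 a b c d x y z + r12 a b c d * W2 a b c d x y z + r13 a b c d * W3 a b c d x y z = (a^2+b^2+c^2+d^2)^2 * x"
  "r21 a b c d * W1 a b c d x y z + r22 a b c d * W2 a b c d x y z + r23 a b c d * W3 a b c d x y z = (a^2+b^2+c^2+d^2)^2 * y"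
  "r31 a b c d * W1 a b c d x y z + r32 a b c d * W2 a b c d x y z + r33 a b c d * W3 a b c d x y z = (a^2+b^2+c^2+d^2)^2 * z"
  unfolding W1_def W2_def W3_def rdefs by (simp_all add: power2_eq_square algebra_simps)


lemma W_prim:
  fixes p :: int
  assumes p: "prime p" and N: "a^2+b^2+c^2+d^2 = p" and g1: "gcd (gcd x y) z = 1"
    and nd: "\<not> (p dvd W1 a b c d x y z \<and> p dvd W2 a b c d x y z \<and> p dvd W3 a b c d x y z)"
  shows "gcd (gcd (W1 a b c d x y z) (W2 a b c d x y z)) (W3 a b c d x y z) = 1"
proof -
  define g where "g = gcd (gcd (W1 a b c d x y z) (W2 a b c d x y z)) (W3 a b c d x y z)"
  have gW: "g dvd W1 a b c d x y z" "g dvd W2 a b c d x y z" "g dvd W3 a b c d x y z"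
    unfolding g_def by (meson dvd_trans gcd_dvd1 gcd_dvd2)+
  have "g dvd p^2 * x" "g dvd p^2 * y" "g dvd p^2 * z"
    using W_back[of a b c d x y z] gW unfolding N
    by (metis dvd_add dvd_mult)+
  then have "g dvd gcd (gcd (p^2*x) (p^2*y)) (p^2*z)" by simp
  also have "gcd (gcd (p^2*x) (p^2*y)) (p^2*z) = p^2"
    using g1 by (simp add: gcd_mult_left)
  finally have gd: "g dvd p^2" .
  have "\<not> p dvd g" using nd gW dvd_trans by blast
  then have "coprime p g" using p prime_imp_coprime by blast
  then have "coprime g (p^2)" by (simp add: coprime_commute)
  then have "g dvd 1" using gd coprime_dvd_mult_left_iff[of g "p^2" 1] by simp
  moreover have "g \<ge> 0" unfolding g_def by simp
  ultimately show ?thesis unfolding g_def[symmetric] by simp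
qed

lemma W_sign:
  "W1 a b c d x y z + W1 a b c d x (-y) (-z) = 2*x*r11 a b c d"
  "W2 a b c d x y z + W2 a b c d x (-y) (-z) = 2*x*r12 a b c d"
  "W3 a b c d x y z + W3 a b c d x (-y) (-z) = 2*x*r13 a b c d"
  unfolding W1_def W2_def W3_def by simp_all

lemma compose:
  fixes p :: int
  assumes p: "prime p" and odd: "odd p" and N: "a^2+b^2+c^2+d^2 = p"
    and good: "\<not> (p dvd r11 a b c d \<and> p dvd r12 a b c d \<and> p dvd r13 a b c d)"
    and g1: "gcd (gcd x y) z = 1" and n: "x^2+y^2+z^2 = m^2" and px: "\<not> p dvd x"
  shows "\<exists>x' y' z'. gcd (gcd x' y') z' = 1 \<and> x'^2+y'^2+z'^2 = (p*m)^2"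
proof -
  have p2: "\<not> p dvd 2"
  proof
    assume "p dvd 2" then have "p \<le> 2" by (simp add: zdvd_imp_le)
    moreover have "p \<ge> 2" using p prime_ge_2_int by blast
    ultimately have "p = 2" by simp
    then show False using odd by simp
  qed
  have p2x: "\<not> p dvd 2*x" using p2 px p prime_dvd_mult_iff by blast
  have "\<not> (p dvd W1 a b c d x y z \<and> p dvd W2 a b c d x y z \<and> p dvd W3 a b c d x y z)
      \<or> \<not> (p dvd W1 a b c d x (-y) (-z) \<and> p dvd W2 a b c d x (-y) (-z) \<and> p dvd W3 a b c d x (-y) (-z))"
  proof (rule ccontr)
    assume "\<not> ?thesis"
    then have "p dvd 2*x*r11 a b c d" "p dvd 2*x*r12 a b c d" "p dvd 2*x*r13 a b c d"
      by (metis W_sign(1) dvd_add, metis W_sign(2) dvd_add, metis W_sign(3) dvd_add)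
    then show False using good p2x p prime_dvd_mult_iff by metis
  qed
  then show ?thesis
  proof
    assume H: "\<not> (p dvd W1 a b c d x y z \<and> p dvd W2 a b c d x y z \<and> p dvd W3 a b c d x y z)"
    show ?thesis
      apply (rule exI[of _ "W1 a b c d x y z"], rule exI[of _ "W2 a b c d x y z"], rule exI[of _ "W3 a b c d x y z"])
      using W_prim[OF p N g1 H] W_norm[of a b c d x y z] N n by (simp add: power_mult_distrib)
  next
    assume H: "\<not> (p dvd W1 a b c d x (-y) (-z) \<and> p dvd W2 a b c d x (-y) (-z) \<and> p dvd W3 a b c d x (-y) (-z))"
    have g1': "gcd (gcd x (-y)) (-z) = 1" using g1 by simp
    show ?thesis
      apply (rule exI[of _ "W1 a b c d x (-y) (-z)"], rule exI[of _ "W2 a b c d x (-y) (-z)"], rule exI[of _ "W3 a b c d x (-y) (-z)"])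
      using W_prim[OF p N g1' H] W_norm[of a b c d x "-y" "-z"] N n by (simp add: power_mult_distrib)
  qed
qed


lemma prime_not_square:
  fixes p k :: int assumes p: "prime p" shows "p \<noteq> k^2"
proof
  assume pk: "p = k^2"
  then have "k dvd p" by (simp add: power2_eq_square)
  then have "\<bar>k\<bar> dvd p" by simp
  then have "\<bar>k\<bar> = 1 \<or> \<bar>k\<bar> = p" using p by (simp add: prime_int_iff)
  then show False
  proof
    assume "\<bar>k\<bar> = 1" then have "p = 1" using pk by (metis power2_abs power_one)
    then show False using p by simp
  next
    assume "\<bar>k\<bar> = p" then have "p = p^2" using pk by (metis power2_abs)
    then have "p * 1 = p * p" by (simp add: power2_eq_square)
    then have "p = 1" using p by (metis mult_left_cancel not_prime_0)
    then show False using p by simp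
  qed
qed

lemma col_sq: "(r11 a b c d)^2 + (r12 a b c d)^2 + (r13 a b c d)^2 = (a^2+b^2+c^2+d^2)^2"
  "(r21 a b c d)^2 + (r22 a b c d)^2 + (r23 a b c d)^2 = (a^2+b^2+c^2+d^2)^2"
  "(r31 a b c d)^2 + (r32 a b c d)^2 + (r33 a b c d)^2 = (a^2+b^2+c^2+d^2)^2"
  unfolding rdefs by (simp_all add: power2_eq_square algebra_simps)

lemma even_entry_not_dvd:
  fixes p e :: int
  assumes p: "prime p" and odd: "odd p" and e: "e \<noteq> 0" "even e" and le: "e^2 \<le> p^2"
  shows "\<not> p dvd e"
proof
  assume "p dvd e"
  then obtain j where j: "e = p*j" by blast
  have p2: "p \<ge> 2" using p prime_ge_2_int by blast
  have "j \<noteq> 0" using e j by simp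
  moreover have "j \<noteq> 1" "j \<noteq> -1" using e(2) odd j by auto
  ultimately have "\<bar>j\<bar> \<ge> 2" by linarith
  then have "\<bar>j\<bar> * \<bar>j\<bar> \<ge> 2 * 2" by (intro mult_mono) auto
  then have "j^2 \<ge> 4" by (simp add: power2_eq_square)
  then have "p^2 * j^2 \<ge> p^2 * 4" by (simp add: mult_left_mono)
  then have "e^2 \<ge> 4 * p^2" using j by (simp add: power_mult_distrib algebra_simps)
  moreover have "p^2 > 0" using p2 by simp
  ultimately show False using le by linarith
qed

lemma good_of_nz:
  fixes p :: int
  assumes p: "prime p" and odd: "odd p" and N: "a^2+b^2+c^2+d^2 = p"
    and nz: "b*c + a*d \<noteq> 0 \<or> b*d - a*c \<noteq> 0"
  shows "\<not> (p dvd r11 a b c d \<and> p dvd r12 a b c d \<and> p dvd r13 a b c d)"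
proof -
  have s: "(r12 a b c d)^2 \<le> p^2" "(r13 a b c d)^2 \<le> p^2"
    using col_sq(1)[of a b c d] N by (simp_all, smt (verit) zero_le_power2)+
  from nz show ?thesis
  proof
    assume "b*c + a*d \<noteq> 0"
    then have "\<not> p dvd r12 a b c d"
      using even_entry_not_dvd[OF p odd _ _ s(1)] by (simp add: r12_def)
    then show ?thesis by simp
  next
    assume "b*d - a*c \<noteq> 0"
    then have "\<not> p dvd r13 a b c d"
      using even_entry_not_dvd[OF p odd _ _ s(2)] by (simp add: r13_def)
    then show ?thesis by simp
  qed
qed

lemma good_quat:
  fixes p :: int
  assumes p: "prime p" and odd: "odd p"
  shows "\<exists>a b c d. a^2+b^2+c^2+d^2 = p \<and> \<not> (p dvd r11 a b c d \<and> p dvd r12 a b c d \<and> p dvd r13 a b c d)"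
proof -
  obtain a b c d where N: "a^2+b^2+c^2+d^2 = p" using lagrange_prime[OF p odd] by blast
  show ?thesis
  proof (cases "b*c + a*d \<noteq> 0 \<or> b*d - a*c \<noteq> 0")
    case True then show ?thesis using good_of_nz[OF p odd N] N by blast
  next
    case False
    then have e1: "b*c + a*d = 0" "b*d - a*c = 0" by simp_all
    have "c*(a^2+b^2) = b*(b*c+a*d) - a*(b*d-a*c)" "d*(a^2+b^2) = a*(b*c+a*d) + b*(b*d-a*c)"
      by (simp_all add: power2_eq_square algebra_simps)
    then have "c*(a^2+b^2) = 0" "d*(a^2+b^2) = 0" using e1 by simp_all
    then have "(a = 0 \<and> b = 0) \<or> (c = 0 \<and> d = 0)"
      by (metis add_nonneg_eq_0_iff mult_eq_0_iff zero_le_power2 power_eq_0_iff)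
    then show ?thesis
    proof
      assume ab: "a = 0 \<and> b = 0"
      then have "c \<noteq> 0" "d \<noteq> 0" using N prime_not_square[OF p, of c] prime_not_square[OF p, of d] by auto
      then have "c*d - a*b \<noteq> 0" using ab by simp
      moreover have N': "a^2+c^2+b^2+d^2 = p" using N by simp
      ultimately show ?thesis using good_of_nz[OF p odd N'] by (metis mult.commute)
    next
      assume cd: "c = 0 \<and> d = 0"
      then have "a \<noteq> 0" "b \<noteq> 0" using N prime_not_square[OF p, of a] prime_not_square[OF p, of b] by auto
      then have "c*d - a*b \<noteq> 0" using cd by simp
      moreover have N': "a^2+c^2+b^2+d^2 = p" using N by simp
      ultimately show ?thesis using good_of_nz[OF p odd N'] by (metis mult.commute)
    qed
  qed
qed

lemma prim_sq:
  fixes n :: int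
  shows "odd n \<Longrightarrow> n > 0 \<Longrightarrow> \<exists>x y z. gcd (gcd x y) z = 1 \<and> x^2+y^2+z^2 = n^2"
proof (induction "nat n" arbitrary: n rule: less_induct)
  case less
  show ?case
  proof (cases "n = 1")
    case True
    then show ?thesis by (intro exI[of _ 1] exI[of _ 0]) simp
  next
    case False
    then have "\<not> is_unit n" using less.prems by simp
    then obtain p where pd: "p dvd n" and p: "prime p"
      using prime_divisor_exists[of n] less.prems by auto
    have p0: "p > 0" using p prime_gt_0_int by blast
    obtain m where nm: "n = p*m" using pd by blast
    have oddp: "odd p" and oddm: "odd m" using less.prems(1) nm by auto
    have m0: "m > 0" using nm p0 less.prems(2) by (simp add: zero_less_mult_iff)
    have "2*m \<le> p*m" using prime_ge_2_int[OF p] m0 by (intro mult_right_mono) auto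
    then have mn: "m < n" using nm m0 by simp
    have "\<exists>x y z::int. gcd (gcd x y) z = 1 \<and> x^2+y^2+z^2 = m^2"
      using less.hyps[of m] oddm m0 mn by simp
    then obtain x y z :: int where g: "gcd (gcd x y) z = 1" and xyz: "x^2+y^2+z^2 = m^2"
      by metis
    obtain a b c d where N: "a^2+b^2+c^2+d^2 = p"
      and good: "\<not> (p dvd r11 a b c d \<and> p dvd r12 a b c d \<and> p dvd r13 a b c d)"
      using good_quat[OF p oddp] by blast
    note C = compose[OF p oddp N good]
    have "\<not> (p dvd x \<and> p dvd y \<and> p dvd z)"
    proof
      assume "p dvd x \<and> p dvd y \<and> p dvd z"
      then have "p dvd gcd (gcd x y) z" by simp
      then show False using g p prime_ge_2_int[OF p] by simp
    qed
    then consider "\<not> p dvd x" | "\<not> p dvd y" | "\<not> p dvd z" by blast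
    then show ?thesis
    proof cases
      case 1 then show ?thesis using C[OF g xyz] nm by simp
    next
      case 2
      have "gcd (gcd y x) z = 1" using g by (simp add: gcd.commute)
      moreover have "y^2+x^2+z^2 = m^2" using xyz by simp
      ultimately show ?thesis using C[of y x z m] 2 nm by simp
    next
      case 3
      have "gcd (gcd z y) x = 1" using g by (simp add: gcd.commute gcd.left_commute)
      moreover have "z^2+y^2+x^2 = m^2" using xyz by simp
      ultimately show ?thesis using C[of z y x m] 3 nm by simp
    qed
  qed
qed


lemma Ints_2_half:
  fixes r :: real assumes "r \<in> \<int>" "0 < r" "r < 2" shows "r = 1"
proof -
  obtain j where j: "r = of_int j" using assms(1) Ints_cases by blast
  then have "0 < j" "j < 2" using assms by simp_all
  then have "j = 1" by simp
  then show ?thesis using j by simp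
qed

lemma bezout3:
  fixes x y z :: int assumes "gcd (gcd x y) z = 1"
  shows "\<exists>a b c. a*x + b*y + c*z = 1"
proof -
  obtain u v where uv: "u * gcd x y + v * z = gcd (gcd x y) z" using bezout_int by blast
  obtain u2 v2 where uv2: "u2 * x + v2 * y = gcd x y" using bezout_int by blast
  have "u * gcd x y + v * z = 1" using uv assms by simp
  then have "u * (u2 * x + v2 * y) + v * z = 1" by (simp only: uv2)
  then have "(u * u2) * x + (u * v2) * y + v * z = 1" by (simp add: algebra_simps)
  then show ?thesis by blast
qed

lemma line_config:
  fixes n :: nat and x y z :: int
  assumes n: "odd n" and x: "odd x" and g: "gcd (gcd x y) z = 1" and N: "x^2+y^2+z^2 = (int n)^2"
  shows "n \<in> APS4"
proof -
  define u where "u = v4 0 0 (real n) (real n)"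
  define v where "v = v4 (of_int (y+z)) (of_int (y-z)) (- of_int x) (of_int x)"
  have n0: "n > 0" using n by (simp add: odd_pos)
  have yz: "even (y+z)" "even (y-z)"
  proof -
    have "y^2+z^2 = (int n)^2 - x^2" using N by simp
    moreover have "odd ((int n)^2)" using n by simp
    moreover have "odd (x^2)" using x by simp
    ultimately have "even (y^2+z^2)" by simp
    then show "even (y+z)" "even (y-z)" by simp_all
  qed
  obtain w1 where w1: "y + z = 2*w1" using yz(1) by blast
  obtain w2 where w2: "y - z = 2*w2" using yz(2) by blast
  obtain x' where x': "x = 2*x' + 1" using x by (metis oddE)
  have Nr: "(real_of_int x)^2 + (real_of_int y)^2 + (real_of_int z)^2 = (real n)^2"
    using arg_cong[OF N, of real_of_int] by simp
  have uv: "inner u v = 0" unfolding u_def v_def inner_v4 by (simp add: algebra_simps)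
  have u0: "u \<noteq> 0" unfolding u_def v4_eq_zero using n0 by simp
  have v0: "v \<noteq> 0" unfolding v_def v4_eq_zero using x by auto
  have uu: "inner u u = inner v v" unfolding u_def v_def inner_v4
    using Nr by (simp add: power2_eq_square algebra_simps)
  have lu: "is_lattice_point4 u" unfolding u_def lattice_iff by simp
  have lv: "is_lattice_point4 v" unfolding v_def lattice_iff by simp
  define S where "S = {st. 0 < fst st \<and> fst st < 1 \<and> 0 < snd st \<and> snd st < 1 \<and> is_lattice_point4 (fst st *\<^sub>R u + snd st *\<^sub>R v)}"
  define f where "f = (\<lambda>k::nat. ((2*real k + 1) / (2*real n), 1/2::real))"
  have comp: "is_lattice_point4 (s *\<^sub>R u + t *\<^sub>R v) \<longleftrightarrow>
      t * of_int (y+z) \<in> \<int> \<and> t * of_int (y-z) \<in> \<int> \<and> s * real n - t * of_int x \<in> \<int> \<and> s * real n + t * of_int x \<in> \<int>" for s t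
    unfolding u_def v_def lattice_iff by simp
  have "S = f ` {..<n}"
  proof
    show "f ` {..<n} \<subseteq> S"
    proof
      fix st assume "st \<in> f ` {..<n}"
      then obtain k where k: "k < n" "st = f k" by blast
      have s1: "0 < (2*real k + 1) / (2*real n)" using n0 by simp
      have s2: "(2*real k + 1) / (2*real n) < 1" using k n0 by (simp add: field_simps)
      have e3: "(2*real k + 1) / (2*real n) * real n - 1/2 * of_int x = of_int (int k - x')"
        using n0 x' by (simp add: field_simps)
      have e4: "(2*real k + 1) / (2*real n) * real n + 1/2 * of_int x = of_int (int k + x' + 1)"
        using n0 x' by (simp add: field_simps)
      have "is_lattice_point4 (fst st *\<^sub>R u + snd st *\<^sub>R v)"
        unfolding comp using k(2) e3 e4 w1 w2 by (simp add: f_def)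
      then show "st \<in> S" unfolding S_def using k s1 s2 by (simp add: f_def)
    qed
  next
    show "S \<subseteq> f ` {..<n}"
    proof
      fix st assume "st \<in> S"
      then obtain s t where st: "st = (s,t)" "0 < s" "s < 1" "0 < t" "t < 1"
        and L: "t * (of_int y + of_int z) \<in> \<int>" "t * (of_int y - of_int z) \<in> \<int>" "s * real n - t * of_int x \<in> \<int>" "s * real n + t * of_int x \<in> \<int>"
        unfolding S_def comp by (cases st) auto
      obtain a b c where abc: "a*x + b*y + c*z = 1" using bezout3[OF g] by blast
      have "2*t = of_int a * ((s * real n + t * of_int x) - (s * real n - t * of_int x))
          + of_int b * (t * (of_int y + of_int z) + t * (of_int y - of_int z)) + of_int c * (t * (of_int y + of_int z) - t * (of_int y - of_int z))"
      proof -
        have "real_of_int (a*x + b*y + c*z) = 1" using abc by simp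
        then have e: "of_int a * of_int x + of_int b * of_int y + of_int c * of_int z = (1::real)" by simp
        have "of_int a * ((s * real n + t * of_int x) - (s * real n - t * of_int x))
          + of_int b * (t * (of_int y + of_int z) + t * (of_int y - of_int z)) + of_int c * (t * (of_int y + of_int z) - t * (of_int y - of_int z))
          = 2*t*(of_int a * of_int x + of_int b * of_int y + of_int c * of_int z)"
          by (simp add: algebra_simps)
        then show ?thesis using e by simp
      qed
      also have "\<dots> \<in> \<int>"
        by (intro Ints_add Ints_mult Ints_of_int Ints_diff L)
      finally have "2*t = 1" using Ints_2_half st by simp
      then have t: "t = 1/2" by simp
      obtain j where j: "s * real n - t * of_int x = of_int j" using L(3) Ints_cases by blast
      define K where "K = j + x'"
      have sn: "s * real n = of_int K + 1/2" using j t x' unfolding K_def by (simp add: field_simps)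
      have "s * real n < real n" using st n0 by simp
      then have "of_int K + 1/2 < real n" using sn by simp
      then have K1: "K < int n" by linarith
      have "0 < s * real n" using st n0 by simp
      then have K0: "K \<ge> 0" using sn by linarith
      have "s = (2*real (nat K) + 1) / (2*real n)" using sn K0 n0 by (simp add: field_simps)
      then have "st = f (nat K)" unfolding f_def using st t by simp
      moreover have "nat K < n" using K1 K0 by simp
      ultimately show "st \<in> f ` {..<n}" by blast
    qed
  qed
  moreover have "inj_on f {..<n}"
    by (rule inj_onI) (use n0 in \<open>simp add: f_def field_simps\<close>)
  ultimately have cS: "card S = n" by (simp add: card_image)
  have "n = card {x \<in> rel_interior (lattice_square4 u v). is_lattice_point4 x}"
    using card_interior[OF uv u0 v0] cS unfolding S_def by simp
  then show ?thesis unfolding APS4_def using lu lv u0 v0 uv uu by blast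
qed

lemma odd_APS4:
  fixes n :: nat assumes n: "odd n" shows "n \<in> APS4"
proof -
  have "odd (int n)" "int n > 0" using n by (simp_all add: odd_pos)
  then obtain x y z where g: "gcd (gcd x y) z = 1" and N: "x^2+y^2+z^2 = (int n)^2"
    using prim_sq by metis
  have "odd x \<or> odd y \<or> odd z"
  proof (rule ccontr)
    assume "\<not> ?thesis"
    then have "even (x^2+y^2+z^2)" by simp
    then show False using N n by simp
  qed
  then consider "odd x" | "odd y" | "odd z" by blast
  then show ?thesis
  proof cases
    case 1 show ?thesis by (rule line_config[OF n 1 g N])
  next
    case 2
    have "gcd (gcd y x) z = 1" using g by (simp add: gcd.commute)
    moreover have "y^2+x^2+z^2 = (int n)^2" using N by simp
    ultimately show ?thesis using line_config[OF n 2, of x z] by metis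
  next
    case 3
    have "gcd (gcd z y) x = 1" using g by (simp add: gcd.commute gcd.left_commute)
    moreover have "z^2+y^2+x^2 = (int n)^2" using N by simp
    ultimately show ?thesis using line_config[OF n 3, of y x] by metis
  qed
qed


lemma int_div_Ints:
  fixes p m :: int assumes "p > 0" "real_of_int m / real_of_int p \<in> \<int>" shows "p dvd m"
proof -
  obtain z where "real_of_int m / real_of_int p = of_int z" using assms(2) Ints_cases by blast
  then have "real_of_int m = of_int (p * z)" using assms(1) by (simp add: field_simps)
  then have "m = p * z" by (simp only: of_int_eq_iff)
  then show ?thesis by simp
qed

lemma dvd_Ints_div:
  fixes p m :: int assumes "p dvd m" shows "real_of_int m / real_of_int p \<in> \<int>"
proof -
  obtain z where "m = p * z" using assms by blast
  then show ?thesis by (cases "p = 0") auto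
qed

lemma cyclic_count:
  fixes p :: int and U V :: "4 \<Rightarrow> int"
  assumes p: "prime p"
    and H1: "\<And>s t::real. (\<forall>i. s * of_int (U i) + t * of_int (V i) \<in> \<int>) \<Longrightarrow> of_int p * s \<in> \<int> \<and> of_int p * t \<in> \<int>"
    and minors: "\<And>i k. p dvd U i * V k - U k * V i"
    and dV: "\<not> p dvd V k0" and dU: "\<not> p dvd U k1"
  shows "card {st :: real \<times> real. 0 < fst st \<and> fst st < 1 \<and> 0 < snd st \<and> snd st < 1 \<and>
     (\<forall>i. fst st * of_int (U i) + snd st * of_int (V i) \<in> \<int>)} = nat (p - 1)"
proof -
  have p0: "p > 0" using p prime_gt_0_int by blast
  have "coprime p (V k0)" using p dV prime_imp_coprime by blast
  then obtain \<beta> \<gamma> where bg: "\<gamma> * p + \<beta> * V k0 = 1"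
    by (metis bezout_int coprime_iff_gcd_eq_1)
  define \<sigma> where "\<sigma> = - U k0 * \<beta>"
  have sig: "p dvd U i + \<sigma> * V i" for i
  proof -
    have "U i + \<sigma> * V i = U i * (\<gamma> * p + \<beta> * V k0) + \<sigma> * V i" using bg by simp
    also have "\<dots> = U i * (\<gamma> * p) + \<beta> * (U i * V k0 - U k0 * V i)"
      unfolding \<sigma>_def by (simp add: algebra_simps)
    finally have "U i + \<sigma> * V i = U i * (\<gamma> * p) + \<beta> * (U i * V k0 - U k0 * V i)" .
    then show ?thesis using minors[of i k0] by simp
  qed
  have nsig: "\<not> p dvd \<sigma>"
  proof
    assume "p dvd \<sigma>"
    then have "p dvd U k1 + \<sigma> * V k1 - \<sigma> * V k1" using sig[of k1] by (intro dvd_diff) auto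
    then show False using dU by simp
  qed
  define T where "T = {1..p-1}"
  define f where "f = (\<lambda>j. (real_of_int j / real_of_int p, real_of_int ((\<sigma>*j) mod p) / real_of_int p))"
  define S where "S = {st :: real \<times> real. 0 < fst st \<and> fst st < 1 \<and> 0 < snd st \<and> snd st < 1 \<and>
     (\<forall>i. fst st * of_int (U i) + snd st * of_int (V i) \<in> \<int>)}"
  have key: "(\<forall>i. real_of_int j / real_of_int p * of_int (U i) + real_of_int k / real_of_int p * of_int (V i) \<in> \<int>)
      \<longleftrightarrow> p dvd k - \<sigma> * j" for j k
  proof -
    have eq: "real_of_int j / real_of_int p * of_int (U i) + real_of_int k / real_of_int p * of_int (V i)
      = real_of_int (j * U i + k * V i) / real_of_int p" for i
      by (simp add: add_divide_distrib)
    have d: "j * U i + k * V i = j * (U i + \<sigma> * V i) + (k - \<sigma> * j) * V i" for i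
      by (simp add: algebra_simps)
    show ?thesis
    proof
      assume "\<forall>i. real_of_int j / real_of_int p * of_int (U i) + real_of_int k / real_of_int p * of_int (V i) \<in> \<int>"
      then have "p dvd j * U k0 + k * V k0" using int_div_Ints[OF p0] eq by metis
      then have "p dvd (k - \<sigma> * j) * V k0" using d[of k0] sig[of k0]
        by (metis dvd_add_right_iff dvd_mult)
      then show "p dvd k - \<sigma> * j" using dV p prime_dvd_mult_iff by blast
    next
      assume "p dvd k - \<sigma> * j"
      then have "p dvd j * U i + k * V i" for i using d[of i] sig[of i] by simp
      then show "\<forall>i. real_of_int j / real_of_int p * of_int (U i) + real_of_int k / real_of_int p * of_int (V i) \<in> \<int>"
        using eq dvd_Ints_div by metis
    qed
  qed
  have "S = f ` T"
  proof
    show "f ` T \<subseteq> S"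
    proof
      fix st assume "st \<in> f ` T"
      then obtain j where j: "1 \<le> j" "j \<le> p - 1" "st = f j" unfolding T_def by auto
      define k where "k = (\<sigma>*j) mod p"
      have k0: "0 \<le> k" "k < p" using p0 by (simp_all add: k_def)
      have "\<not> p dvd j" using j by (auto dest: zdvd_imp_le)
      then have "\<not> p dvd \<sigma>*j" using nsig p prime_dvd_mult_iff by blast
      then have "k \<noteq> 0" unfolding k_def by (simp add: dvd_eq_mod_eq_0)
      have "p dvd k - \<sigma> * j" unfolding k_def by (metis mod_eq_dvd_iff mod_mod_trivial)
      moreover have fj: "f j = (real_of_int j / real_of_int p, real_of_int k / real_of_int p)"
        unfolding f_def k_def by simp
      moreover have "0 < k" using k0 \<open>k \<noteq> 0\<close> by simp
      ultimately show "st \<in> S" using key[of j k] j k0 p0 unfolding S_def by simp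
    qed
  next
    show "S \<subseteq> f ` T"
    proof
      fix st assume "st \<in> S"
      then obtain s t where st: "st = (s,t)" "0 < s" "s < 1" "0 < t" "t < 1"
        and L: "\<forall>i. s * of_int (U i) + t * of_int (V i) \<in> \<int>"
        unfolding S_def by (cases st) auto
      obtain j where j: "of_int p * s = of_int j" using H1[OF L] Ints_cases by blast
      obtain k where k: "of_int p * t = of_int k" using H1[OF L] Ints_cases by (metis (no_types))
      have sj: "s = real_of_int j / real_of_int p" "t = real_of_int k / real_of_int p"
        using j k p0 by (simp_all add: field_simps)
      have "0 < j" "j < p" using st sj p0 by (simp_all add: field_simps)
      have "0 < k" "k < p" using st sj p0 by (simp_all add: field_simps)
      have "p dvd k - \<sigma> * j" using key[of j k] L sj by simp
      then have "k = (\<sigma> * j) mod p" using \<open>0 < k\<close> \<open>k < p\<close>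
        by (metis mod_eq_dvd_iff mod_pos_pos_trivial less_le)
      then have "st = f j" using st sj unfolding f_def by simp
      moreover have "j \<in> T" using \<open>0 < j\<close> \<open>j < p\<close> unfolding T_def by simp
      ultimately show "st \<in> f ` T" by blast
    qed
  qed
  moreover have "inj_on f T"
    by (rule inj_onI) (use p0 in \<open>auto simp: f_def\<close>)
  ultimately have "card S = card T" by (simp add: card_image)
  then show ?thesis unfolding S_def T_def by simp
qed


lemma aps_UV:
  fixes p :: int and U V :: "4 \<Rightarrow> int"
  assumes p: "prime p"
    and H1: "\<And>s t::real. (\<forall>i. s * of_int (U i) + t * of_int (V i) \<in> \<int>) \<Longrightarrow> of_int p * s \<in> \<int> \<and> of_int p * t \<in> \<int>"
    and minors: "\<And>i k. p dvd U i * V k - U k * V i"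
    and dV: "\<not> p dvd V k0" and dU: "\<not> p dvd U k1"
    and orth: "(\<Sum>i\<in>UNIV. U i * V i) = 0" and nrm: "(\<Sum>i\<in>UNIV. U i * U i) = (\<Sum>i\<in>UNIV. V i * V i)"
  shows "nat (p - 1) \<in> APS4"
proof -
  define u where "u = (\<chi> i. real_of_int (U i))"
  define v where "v = (\<chi> i. real_of_int (V i))"
  have "U k1 \<noteq> 0" "V k0 \<noteq> 0" using dU dV by auto
  then have u0: "u \<noteq> 0" and v0: "v \<noteq> 0" unfolding u_def v_def by (auto simp: vec_eq_iff)
  have uv: "inner u v = 0" unfolding u_def v_def inner_vec_def
    using arg_cong[OF orth, of real_of_int] by simp
  have uu: "inner u u = inner v v" unfolding u_def v_def inner_vec_def
    using arg_cong[OF nrm, of real_of_int] by simp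
  have lu: "is_lattice_point4 u" "is_lattice_point4 v" unfolding u_def v_def is_lattice_point4_def by simp_all
  have "card {x \<in> rel_interior (lattice_square4 u v). is_lattice_point4 x} =
     card {st :: real \<times> real. 0 < fst st \<and> fst st < 1 \<and> 0 < snd st \<and> snd st < 1 \<and>
     (\<forall>i. fst st * of_int (U i) + snd st * of_int (V i) \<in> \<int>)}"
    unfolding card_interior[OF uv u0 v0] by (simp add: is_lattice_point4_def u_def v_def)
  also have "\<dots> = nat (p - 1)" by (rule cyclic_count[OF p H1 minors dV dU])
  finally have c: "nat (p - 1) = card {x \<in> rel_interior (lattice_square4 u v). is_lattice_point4 x}" by simp
  show ?thesis unfolding APS4_def mem_Collect_eq
    by (intro exI[of _ u] exI[of _ v] conjI lu u0 v0 uv uu c)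
qed

definition mk4 :: "int \<Rightarrow> int \<Rightarrow> int \<Rightarrow> int \<Rightarrow> 4 \<Rightarrow> int" where
  "mk4 a b c d = (\<lambda>i. if i = 1 then a else if i = 2 then b else if i = 3 then c else d)"

lemma mk4_simps [simp]: "mk4 a b c d 1 = a" "mk4 a b c d 2 = b" "mk4 a b c d 3 = c" "mk4 a b c d 4 = d"
  by (simp_all add: mk4_def)

lemma sum_mk4: "(\<Sum>i\<in>UNIV. f (mk4 a b c d i) (mk4 a' b' c' d' i)) = f a a' + f b b' + f c c' + f d d'"
  by (simp add: sum_4)

lemma two_sq_APS4:
  fixes p a b :: int
  assumes p: "prime p" and N: "a^2 + b^2 = p"
  shows "nat (p - 1) \<in> APS4"
proof -
  have p2: "p \<ge> 2" using p prime_ge_2_int by blast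
  have na: "\<not> p dvd a"
  proof
    assume "p dvd a"
    show False
    proof (cases "a = 0")
      case True then show False using N prime_not_square[OF p, of b] by simp
    next
      case False
      then have "\<bar>a\<bar> \<ge> p" using \<open>p dvd a\<close> dvd_imp_le_int[of a p] p2 by simp
      then have "\<bar>a\<bar> * \<bar>a\<bar> \<ge> p * p" using p2 by (intro mult_mono) auto
      then have "a^2 \<ge> p*p" by (simp add: power2_eq_square)
      moreover have "p * p > p" using p2 by simp
      moreover have "b^2 \<ge> 0" by simp
      ultimately show False using N by linarith
    qed
  qed
  define U where "U = mk4 a b 0 0"
  define V where "V = mk4 (-b) a 0 0"
  have Nr: "real_of_int a * real_of_int a + real_of_int b * real_of_int b = real_of_int p"
    using arg_cong[OF N, of real_of_int] by (simp add: power2_eq_square)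
  have H1: "of_int p * s \<in> \<int> \<and> of_int p * t \<in> \<int>"
    if L: "\<forall>i. s * of_int (U i) + t * of_int (V i) \<in> \<int>" for s t :: real
  proof -
    have c: "s * of_int a + t * of_int (-b) \<in> \<int>" "s * of_int b + t * of_int a \<in> \<int>"
      using L[rule_format, of 1] L[rule_format, of 2] unfolding U_def V_def by simp_all
    have "of_int a * (s * of_int a + t * of_int (-b)) + of_int b * (s * of_int b + t * of_int a)
        = s * (real_of_int a * real_of_int a + real_of_int b * real_of_int b)" by (simp add: algebra_simps)
    then have e1: "of_int p * s = of_int a * (s * of_int a + t * of_int (-b)) + of_int b * (s * of_int b + t * of_int a)"
      using Nr by simp
    have "- of_int b * (s * of_int a + t * of_int (-b)) + of_int a * (s * of_int b + t * of_int a)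
        = t * (real_of_int a * real_of_int a + real_of_int b * real_of_int b)" by (simp add: algebra_simps)
    then have e2: "of_int p * t = - of_int b * (s * of_int a + t * of_int (-b)) + of_int a * (s * of_int b + t * of_int a)"
      using Nr by simp
    have "of_int a * (s * of_int a + t * of_int (-b)) + of_int b * (s * of_int b + t * of_int a) \<in> \<int>"
      by (metis Ints_add Ints_mult Ints_of_int c(1) c(2))
    moreover have "- of_int b * (s * of_int a + t * of_int (-b)) + of_int a * (s * of_int b + t * of_int a) \<in> \<int>"
      by (metis Ints_add Ints_mult Ints_of_int Ints_minus c(1) c(2))
    ultimately show ?thesis unfolding e1 e2 by simp
  qed
  have minors: "p dvd U i * V k - U k * V i" for i k
  proof -
    have e: "a * a + b * b = p" using N by (simp add: power2_eq_square)
    have e2: "b * (-b) - a * a = - p" using e by simp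
    have "p dvd a * a - b * (-b)" using e by simp
    moreover have "p dvd b * (-b) - a * a" unfolding e2 by simp
    ultimately have "p dvd a * a - b * (-b)" "p dvd b * (-b) - a * a" by simp_all
    then show ?thesis using exhaust_4[of i] exhaust_4[of k] unfolding U_def V_def
      by (elim disjE) simp_all
  qed
  have d1: "\<not> p dvd V 2" "\<not> p dvd U 1" using na unfolding U_def V_def by simp_all
  have o: "(\<Sum>i\<in>UNIV. U i * V i) = 0" unfolding U_def V_def sum_4 by simp
  have nn: "(\<Sum>i\<in>UNIV. U i * U i) = (\<Sum>i\<in>UNIV. V i * V i)" unfolding U_def V_def sum_4 by simp
  have "nat (p - 1) \<in> APS4"
    by (rule aps_UV[OF p H1 minors d1 o nn])
  then show ?thesis .
qed


lemma G_int:
  fixes p k1 k2 k3 :: int and r :: real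
  assumes p: "prime p" and h0: "r * of_int p ^ 2 \<in> \<int>"
    and h: "r * of_int p * of_int k1 \<in> \<int>" "r * of_int p * of_int k2 \<in> \<int>" "r * of_int p * of_int k3 \<in> \<int>"
    and nk: "\<not> (p dvd k1 \<and> p dvd k2 \<and> p dvd k3)"
  shows "of_int p * r \<in> \<int>"
proof -
  have p0: "p > 0" using p prime_gt_0_int by blast
  obtain m where m: "r * of_int p ^ 2 = of_int m" using h0 by (auto elim!: Ints_cases)
  have rp: "r * of_int p = of_int m / of_int p" using m p0 by (simp add: field_simps power2_eq_square)
  have dv: "p dvd m * k" if Hk: "r * of_int p * of_int k \<in> \<int>" for k
  proof -
    obtain w where w: "r * of_int p * of_int k = of_int w" using Hk by (auto elim!: Ints_cases)
    then have "of_int m * of_int k = real_of_int p * of_int w" using rp p0 by (simp add: field_simps)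
    then have "real_of_int (m * k) = real_of_int (p * w)" by simp
    then have "m * k = p * w" by (simp only: of_int_eq_iff)
    then show ?thesis by simp
  qed
  have "p dvd m"
  proof -
    have "p dvd m \<or> p dvd k1" "p dvd m \<or> p dvd k2" "p dvd m \<or> p dvd k3"
      using dv[OF h(1)] dv[OF h(2)] dv[OF h(3)] prime_dvd_mult_iff[OF p] by simp_all
    then show ?thesis using nk by auto
  qed
  then have "of_int m / of_int p \<in> (\<int>::real set)" by (rule dvd_Ints_div)
  then show ?thesis using rp by (simp add: mult.commute)
qed

lemma H1_gen:
  fixes u1 u2 u3 w1 w2 w3 k1 k2 k3 p :: int and s t :: real
  assumes p: "prime p"
    and uu: "u1*u1+u2*u2+u3*u3 = p^2" and uw: "u1*w1+u2*w2+u3*w3 = 0" and ww: "w1*w1+w2*w2+w3*w3 = p^2"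
    and cr: "u2*w3 - u3*w2 = p*k1" "u3*w1 - u1*w3 = p*k2" "u1*w2 - u2*w1 = p*k3"
    and nk: "\<not> (p dvd k1 \<and> p dvd k2 \<and> p dvd k3)"
    and x: "s * of_int u1 + t * of_int w1 \<in> \<int>" "s * of_int u2 + t * of_int w2 \<in> \<int>" "s * of_int u3 + t * of_int w3 \<in> \<int>"
  shows "of_int p * s \<in> \<int> \<and> of_int p * t \<in> \<int>"
proof -
  define x1 where "x1 = s * of_int u1 + t * of_int w1"
  define x2 where "x2 = s * of_int u2 + t * of_int w2"
  define x3 where "x3 = s * of_int u3 + t * of_int w3"
  note xI = x[folded x1_def x2_def x3_def]
  have R: "real_of_int u1 * of_int u1 + of_int u2 * of_int u2 + of_int u3 * of_int u3 = of_int p^2"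
     "real_of_int u1 * of_int w1 + of_int u2 * of_int w2 + of_int u3 * of_int w3 = 0"
     "real_of_int w1 * of_int w1 + of_int w2 * of_int w2 + of_int w3 * of_int w3 = of_int p^2"
     "real_of_int u2 * of_int w3 - of_int u3 * of_int w2 = of_int p * of_int k1"
     "real_of_int u3 * of_int w1 - of_int u1 * of_int w3 = of_int p * of_int k2"
     "real_of_int u1 * of_int w2 - of_int u2 * of_int w1 = of_int p * of_int k3"
    using arg_cong[OF uu, of real_of_int] arg_cong[OF uw, of real_of_int] arg_cong[OF ww, of real_of_int]
      arg_cong[OF cr(1), of real_of_int] arg_cong[OF cr(2), of real_of_int] arg_cong[OF cr(3), of real_of_int]
    by simp_all
  have e1: "s * of_int p ^ 2 = of_int u1 * x1 + of_int u2 * x2 + of_int u3 * x3"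
  proof -
    have "of_int u1 * x1 + of_int u2 * x2 + of_int u3 * x3 =
      s * (real_of_int u1 * of_int u1 + of_int u2 * of_int u2 + of_int u3 * of_int u3) + t * (real_of_int u1 * of_int w1 + of_int u2 * of_int w2 + of_int u3 * of_int w3)"
      unfolding x1_def x2_def x3_def by (simp add: algebra_simps)
    then show ?thesis using R by simp
  qed
  have e2: "t * of_int p ^ 2 = of_int w1 * x1 + of_int w2 * x2 + of_int w3 * x3"
  proof -
    have "of_int w1 * x1 + of_int w2 * x2 + of_int w3 * x3 =
      s * (real_of_int u1 * of_int w1 + of_int u2 * of_int w2 + of_int u3 * of_int w3) + t * (real_of_int w1 * of_int w1 + of_int w2 * of_int w2 + of_int w3 * of_int w3)"
      unfolding x1_def x2_def x3_def by (simp add: algebra_simps)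
    then show ?thesis using R by simp
  qed
  have s1: "s * of_int p * of_int k1 = of_int w3 * x2 - of_int w2 * x3"
  proof -
    have "of_int w3 * x2 - of_int w2 * x3 = s * (real_of_int u2 * of_int w3 - of_int u3 * of_int w2)"
      unfolding x1_def x2_def x3_def by (simp add: algebra_simps)
    then show ?thesis using R by simp
  qed
  have s2: "s * of_int p * of_int k2 = of_int w1 * x3 - of_int w3 * x1"
  proof -
    have "of_int w1 * x3 - of_int w3 * x1 = s * (real_of_int u3 * of_int w1 - of_int u1 * of_int w3)"
      unfolding x1_def x2_def x3_def by (simp add: algebra_simps)
    then show ?thesis using R by simp
  qed
  have s3: "s * of_int p * of_int k3 = of_int w2 * x1 - of_int w1 * x2"
  proof -
    have "of_int w2 * x1 - of_int w1 * x2 = s * (real_of_int u1 * of_int w2 - of_int u2 * of_int w1)"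
      unfolding x1_def x2_def x3_def by (simp add: algebra_simps)
    then show ?thesis using R by simp
  qed
  have t1: "t * of_int p * of_int k1 = of_int u2 * x3 - of_int u3 * x2"
  proof -
    have "of_int u2 * x3 - of_int u3 * x2 = t * (real_of_int u2 * of_int w3 - of_int u3 * of_int w2)"
      unfolding x1_def x2_def x3_def by (simp add: algebra_simps)
    then show ?thesis using R by simp
  qed
  have t2: "t * of_int p * of_int k2 = of_int u3 * x1 - of_int u1 * x3"
  proof -
    have "of_int u3 * x1 - of_int u1 * x3 = t * (real_of_int u3 * of_int w1 - of_int u1 * of_int w3)"
      unfolding x1_def x2_def x3_def by (simp add: algebra_simps)
    then show ?thesis using R by simp
  qed
  have t3: "t * of_int p * of_int k3 = of_int u1 * x2 - of_int u2 * x1"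
  proof -
    have "of_int u1 * x2 - of_int u2 * x1 = t * (real_of_int u1 * of_int w2 - of_int u2 * of_int w1)"
      unfolding x1_def x2_def x3_def by (simp add: algebra_simps)
    then show ?thesis using R by simp
  qed
  have I: "real_of_int a * x1 + of_int b * x2 + of_int c * x3 \<in> \<int>" for a b c
    by (intro Ints_add Ints_mult Ints_of_int xI)
  have I2: "real_of_int a * xa - of_int b * xb \<in> \<int>" if xab: "xa \<in> \<int>" "xb \<in> \<int>" for a b xa xb
    by (intro Ints_diff Ints_mult Ints_of_int xab)
  have A: "of_int p * s \<in> \<int>"
  proof (rule G_int[OF p _ _ _ _ nk])
    show "s * of_int p ^ 2 \<in> \<int>" unfolding e1 by (rule I)
    show "s * of_int p * of_int k1 \<in> \<int>" unfolding s1 by (intro I2 xI)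
    show "s * of_int p * of_int k2 \<in> \<int>" unfolding s2 by (intro I2 xI)
    show "s * of_int p * of_int k3 \<in> \<int>" unfolding s3 by (intro I2 xI)
  qed
  have B: "of_int p * t \<in> \<int>"
  proof (rule G_int[OF p _ _ _ _ nk])
    show "t * of_int p ^ 2 \<in> \<int>" unfolding e2 by (rule I)
    show "t * of_int p * of_int k1 \<in> \<int>" unfolding t1 by (intro I2 xI)
    show "t * of_int p * of_int k2 \<in> \<int>" unfolding t2 by (intro I2 xI)
    show "t * of_int p * of_int k3 \<in> \<int>" unfolding t3 by (intro I2 xI)
  qed
  show ?thesis using A B by simp
qed


lemma rot_ids:
  "r11 a b c d * r21 a b c d + r12 a b c d * r22 a b c d + r13 a b c d * r23 a b c d = 0"
  "r12 a b c d * r23 a b c d - r13 a b c d * r22 a b c d = (a^2+b^2+c^2+d^2) * r31 a b c d"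
  "r13 a b c d * r21 a b c d - r11 a b c d * r23 a b c d = (a^2+b^2+c^2+d^2) * r32 a b c d"
  "r11 a b c d * r22 a b c d - r12 a b c d * r21 a b c d = (a^2+b^2+c^2+d^2) * r33 a b c d"
  unfolding rdefs by (simp_all add: power2_eq_square algebra_simps)

lemma rot_APS4:
  fixes p a b c d :: int
  assumes p: "prime p" and N: "a^2+b^2+c^2+d^2 = p"
    and g1: "\<not> (p dvd r11 a b c d \<and> p dvd r12 a b c d \<and> p dvd r13 a b c d)"
    and g2: "\<not> (p dvd r21 a b c d \<and> p dvd r22 a b c d \<and> p dvd r23 a b c d)"
    and g3: "\<not> (p dvd r31 a b c d \<and> p dvd r32 a b c d \<and> p dvd r33 a b c d)"
  shows "nat (p - 1) \<in> APS4"
proof -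
  define u1 where "u1 = r11 a b c d"
  define u2 where "u2 = r12 a b c d"
  define u3 where "u3 = r13 a b c d"
  define w1 where "w1 = r21 a b c d"
  define w2 where "w2 = r22 a b c d"
  define w3 where "w3 = r23 a b c d"
  define k1 where "k1 = r31 a b c d"
  define k2 where "k2 = r32 a b c d"
  define k3 where "k3 = r33 a b c d"
  have uu: "u1*u1+u2*u2+u3*u3 = p^2" using col_sq(1)[of a b c d] N
    unfolding u1_def u2_def u3_def by (simp add: power2_eq_square)
  have ww: "w1*w1+w2*w2+w3*w3 = p^2" using col_sq(2)[of a b c d] N
    unfolding w1_def w2_def w3_def by (simp add: power2_eq_square)
  have uw: "u1*w1+u2*w2+u3*w3 = 0" using rot_ids(1)[of a b c d]
    unfolding u1_def u2_def u3_def w1_def w2_def w3_def by simp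
  have cr: "u2*w3 - u3*w2 = p*k1" "u3*w1 - u1*w3 = p*k2" "u1*w2 - u2*w1 = p*k3"
    using rot_ids(2-4)[of a b c d] N
    unfolding u1_def u2_def u3_def w1_def w2_def w3_def k1_def k2_def k3_def by simp_all
  have nk: "\<not> (p dvd k1 \<and> p dvd k2 \<and> p dvd k3)" using g3 unfolding k1_def k2_def k3_def .
  define U where "U = mk4 u1 u2 u3 0"
  define V where "V = mk4 w1 w2 w3 0"
  have H1: "of_int p * s \<in> \<int> \<and> of_int p * t \<in> \<int>"
    if L: "\<forall>i. s * of_int (U i) + t * of_int (V i) \<in> \<int>" for s t :: real
  proof -
    have "s * of_int u1 + t * of_int w1 \<in> \<int>" "s * of_int u2 + t * of_int w2 \<in> \<int>" "s * of_int u3 + t * of_int w3 \<in> \<int>"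
      using L[rule_format, of 1] L[rule_format, of 2] L[rule_format, of 3] unfolding U_def V_def by simp_all
    then show ?thesis by (rule H1_gen[OF p uu uw ww cr nk])
  qed
  have minors: "p dvd U i * V k - U k * V i" for i k
  proof -
    have m: "p dvd u1 * w2 - u2 * w1" "p dvd u2 * w1 - u1 * w2"
         "p dvd u1 * w3 - u3 * w1" "p dvd u3 * w1 - u1 * w3"
         "p dvd u2 * w3 - u3 * w2" "p dvd u3 * w2 - u2 * w3"
    proof -
      show "p dvd u1 * w2 - u2 * w1" "p dvd u3 * w1 - u1 * w3" "p dvd u2 * w3 - u3 * w2"
        using cr by simp_all
      have "u2 * w1 - u1 * w2 = - (p*k3)" "u1 * w3 - u3 * w1 = - (p*k2)" "u3 * w2 - u2 * w3 = - (p*k1)"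
        using cr by simp_all
      then show "p dvd u2 * w1 - u1 * w2" "p dvd u1 * w3 - u3 * w1" "p dvd u3 * w2 - u2 * w3"
        by simp_all
    qed
    show ?thesis using exhaust_4[of i] exhaust_4[of k] m unfolding U_def V_def
      by (elim disjE) simp_all
  qed
  obtain k0 where d0: "\<not> p dvd V k0"
  proof -
    have "\<not> p dvd V 1 \<or> \<not> p dvd V 2 \<or> \<not> p dvd V 3" using g2 unfolding V_def w1_def w2_def w3_def by simp
    then show thesis using that by blast
  qed
  obtain k1' where d1: "\<not> p dvd U k1'"
  proof -
    have "\<not> p dvd U 1 \<or> \<not> p dvd U 2 \<or> \<not> p dvd U 3" using g1 unfolding U_def u1_def u2_def u3_def by simp
    then show thesis using that by blast
  qed
  have o: "(\<Sum>i\<in>UNIV. U i * V i) = 0" unfolding U_def V_def sum_4 using uw by simp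
  have nn: "(\<Sum>i\<in>UNIV. U i * U i) = (\<Sum>i\<in>UNIV. V i * V i)" unfolding U_def V_def sum_4 using uu ww by simp
  show ?thesis by (rule aps_UV[OF p H1 minors d0 d1 o nn])
qed


lemma good2:
  fixes p e f :: int
  assumes p: "prime p" and odd: "odd p" and le: "e^2 \<le> p^2" "f^2 \<le> p^2" and ev: "even e" "even f"
    and nz: "e \<noteq> 0 \<or> f \<noteq> 0"
  shows "\<not> (p dvd e \<and> p dvd f)"
  using nz even_entry_not_dvd[OF p odd _ ev(1) le(1)] even_entry_not_dvd[OF p odd _ ev(2) le(2)] by auto

lemma sq_le_sum3: fixes x y z q :: int assumes "x^2+y^2+z^2 = q" shows "x^2 \<le> q" "y^2 \<le> q" "z^2 \<le> q"
  using assms by (smt (verit) zero_le_power2)+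

lemma prime_APS4:
  fixes p :: nat assumes p: "prime p" and p11: "p \<ge> 11"
  shows "p - 1 \<in> APS4"
proof -
  define P where "P = int p"
  have P: "prime P" using p unfolding P_def by simp
  have oddP: "odd P" using prime_odd_nat[OF p] p11 unfolding P_def by simp
  obtain a b c d where N: "a^2+b^2+c^2+d^2 = P" using lagrange_prime[OF P oddP] by blast
  have res: "nat (P - 1) = p - 1" unfolding P_def by simp
  have two: "nat (P - 1) \<in> APS4" if "x^2 + y^2 = P" for x y
    using two_sq_APS4[OF P that] .
  note cs = col_sq[of a b c d, unfolded N]
  show ?thesis
  proof (cases "(b*c + a*d \<noteq> 0 \<or> b*d - a*c \<noteq> 0) \<and> (b*c - a*d \<noteq> 0 \<or> c*d + a*b \<noteq> 0) \<and> (b*d + a*c \<noteq> 0 \<or> c*d - a*b \<noteq> 0)")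
    case True
    have nz1: "r12 a b c d \<noteq> 0 \<or> r13 a b c d \<noteq> 0" using True unfolding r12_def r13_def by auto
    have ev1: "even (r12 a b c d)" "even (r13 a b c d)" unfolding r12_def r13_def by simp_all
    have "\<not> (P dvd r12 a b c d \<and> P dvd r13 a b c d)"
      by (rule good2[OF P oddP sq_le_sum3(2,3)[OF cs(1)] ev1 nz1])
    then have g1: "\<not> (P dvd r11 a b c d \<and> P dvd r12 a b c d \<and> P dvd r13 a b c d)" by blast
    have nz2: "r21 a b c d \<noteq> 0 \<or> r23 a b c d \<noteq> 0" using True unfolding r21_def r23_def by auto
    have ev2: "even (r21 a b c d)" "even (r23 a b c d)" unfolding r21_def r23_def by simp_all
    have "\<not> (P dvd r21 a b c d \<and> P dvd r23 a b c d)"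
      by (rule good2[OF P oddP sq_le_sum3(1,3)[OF cs(2)] ev2 nz2])
    then have g2: "\<not> (P dvd r21 a b c d \<and> P dvd r22 a b c d \<and> P dvd r23 a b c d)" by blast
    have nz3: "r31 a b c d \<noteq> 0 \<or> r32 a b c d \<noteq> 0" using True unfolding r31_def r32_def by auto
    have ev3: "even (r31 a b c d)" "even (r32 a b c d)" unfolding r31_def r32_def by simp_all
    have "\<not> (P dvd r31 a b c d \<and> P dvd r32 a b c d)"
      by (rule good2[OF P oddP sq_le_sum3(1,2)[OF cs(3)] ev3 nz3])
    then have g3: "\<not> (P dvd r31 a b c d \<and> P dvd r32 a b c d \<and> P dvd r33 a b c d)" by blast
    show ?thesis using rot_APS4[OF P N g1 g2 g3] res by simp
  next
    case False
    have "\<exists>x y. x^2 + y^2 = P"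
    proof -
      consider "b*c + a*d = 0" "b*d - a*c = 0" | "b*c - a*d = 0" "c*d + a*b = 0" | "b*d + a*c = 0" "c*d - a*b = 0"
        using False by blast
      then show ?thesis
      proof cases
        case 1
        have "c*(a^2+b^2) = b*(b*c+a*d) - a*(b*d-a*c)" "d*(a^2+b^2) = a*(b*c+a*d) + b*(b*d-a*c)"
          by (simp_all add: power2_eq_square algebra_simps)
        then have e: "c*(a^2+b^2) = 0" "d*(a^2+b^2) = 0" using 1 by simp_all
        show ?thesis
        proof (cases "a^2+b^2 = 0")
          case True
          then have "a = 0" "b = 0" by (simp_all add: sum_power2_eq_zero_iff)
          then have "c^2 + d^2 = P" using N by simp
          then show ?thesis by blast
        next
          case False
          then have "c = 0" "d = 0" using e False by auto
          then have "a^2 + b^2 = P" using N by simp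
          then show ?thesis by blast
        qed
      next
        case 2
        have "c*(b^2+d^2) = b*(b*c-a*d) + d*(c*d+a*b)" "a*(b^2+d^2) = b*(c*d+a*b) - d*(b*c-a*d)"
          by (simp_all add: power2_eq_square algebra_simps)
        then have e: "c*(b^2+d^2) = 0" "a*(b^2+d^2) = 0" using 2 by simp_all
        show ?thesis
        proof (cases "b^2+d^2 = 0")
          case True
          then have "b = 0" "d = 0" by (simp_all add: sum_power2_eq_zero_iff)
          then have "a^2 + c^2 = P" using N by simp
          then show ?thesis by blast
        next
          case False
          then have "a = 0" "c = 0" using e False by auto
          then have "b^2 + d^2 = P" using N by simp
          then show ?thesis by blast
        qed
      next
        case 3
        have "d*(b^2+c^2) = b*(b*d+a*c) + c*(c*d-a*b)" "a*(b^2+c^2) = c*(b*d+a*c) - b*(c*d-a*b)"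
          by (simp_all add: power2_eq_square algebra_simps)
        then have e: "d*(b^2+c^2) = 0" "a*(b^2+c^2) = 0" using 3 by simp_all
        show ?thesis
        proof (cases "b^2+c^2 = 0")
          case True
          then have "b = 0" "c = 0" by (simp_all add: sum_power2_eq_zero_iff)
          then have "a^2 + d^2 = P" using N by simp
          then show ?thesis by blast
        next
          case False
          then have "a = 0" "d = 0" using e False by auto
          then have "b^2 + c^2 = P" using N by simp
          then show ?thesis by blast
        qed
      qed
    qed
    then show ?thesis using two res by auto
  qed
qed


theorem theorem2p13:
  shows "(\<forall>n::nat. odd n \<longrightarrow> n \<in> APS4) \<and>
         (\<forall>p::nat. prime p \<and> p \<ge> 11 \<longrightarrow> p - 1 \<in> APS4)"
  using odd_APS4 prime_APS4 by blast

end
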